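(* Let $R$ be a prime right noetherian ring whose right Krull dimension is a finite integer $n$, let $m\le n$ be an integer, let $X=\{p\in \operatorname{Spec}R : |R/p| = m\}$, and let $V=\bigcap_{p\in X}C(p)$. Define $k=\{I : I\cap V\neq\emptyset\}$, $w=\{I : R/I \text{ is } V\text{-torsion}\}$, $g=\{I : |R/I|<m\}$ (families of right ideals of $R$). Then: (i) $w$ and $g$ are Gabriel filters; (ii) if $X$ has the right intersection condition, then $g\subseteq k$.
   Context: All modules are right modules; $|M|$ denotes the (right) Krull dimension of $M$. For an ideal $A$, $C(A)$ is the set of elements of $R$ regular modulo $A$. A right $R$-module $M$ is $V$-torsion if for every $x\in M$ there is $t\in V$ with $xt=0$. A family $F$ of right ideals is a Gabriel filter if: (a) $I\in F$ and $I\subseteq J$ (a right ideal) imply $J\in F$; (b) $I,J\in F$ imply $I\cap J\in F$; (c) $I\in F$ and $x\in R$ imply $x^{-1}(I)=\{a\in R: xa\in I\}\in F$. $X$ has the right intersection condition if for every right ideal $I$ with $I\cap C(p)\neq\emptyset$ for all $p\in X$, one has $I\cap V\neq\emptyset$. *)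

theory Defs
  imports Main
begin

text \<open>Right R-modules of the form J/I (I, J right ideals, I contained in J) are represented by the
interval of right ideals between I and J, which is exactly their lattice of submodules.\<close>

definition right_ideal :: "'a::ring_1 set \<Rightarrow> bool" where
  "right_ideal I \<longleftrightarrow> 0 \<in> I \<and> (\<forall>x\<in>I. \<forall>y\<in>I. x + y \<in> I) \<and> (\<forall>x\<in>I. - x \<in> I)
      \<and> (\<forall>x\<in>I. \<forall>r. x * r \<in> I)"

definition two_sided_ideal :: "'a::ring_1 set \<Rightarrow> bool" where
  "two_sided_ideal I \<longleftrightarrow> right_ideal I \<and> (\<forall>x\<in>I. \<forall>r. r * x \<in> I)"

definition prime_ideal :: "'a::ring_1 set \<Rightarrow> bool" where
  "prime_ideal P \<longleftrightarrow> two_sided_ideal P \<and> P \<noteq> UNIV \<and>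
     (\<forall>A B. two_sided_ideal A \<longrightarrow> two_sided_ideal B \<longrightarrow> (\<forall>a\<in>A. \<forall>b\<in>B. a * b \<in> P)
        \<longrightarrow> A \<subseteq> P \<or> B \<subseteq> P)"

definition Spec :: "'a::ring_1 set set" where
  "Spec = {P. prime_ideal P}"

definition prime_ring :: "'a::ring_1 itself \<Rightarrow> bool" where
  "prime_ring _ \<longleftrightarrow> prime_ideal ({0} :: 'a set)"

definition right_noetherian :: "'a::ring_1 itself \<Rightarrow> bool" where
  "right_noetherian _ \<longleftrightarrow> (\<forall>C :: nat \<Rightarrow> 'a set. (\<forall>i. right_ideal (C i)) \<longrightarrow>
      (\<forall>i. C i \<subseteq> C (Suc i)) \<longrightarrow> (\<exists>N. \<forall>i\<ge>N. C i = C N))"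

text \<open>Krull dimension (deviation of the submodule lattice).  kd_le j I J means that the module
J/I has Krull dimension at most j - 1 (as an integer; -1 is the dimension of the zero module).
|M| = -1 iff M = 0;  |M| \<le> a (a \<ge> 0) iff for every descending chain M_0 \<supseteq> M_1 \<supseteq> ...
of submodules, |M_i/M_(i+1)| < a for all but finitely many i.\<close>
fun kd_le :: "nat \<Rightarrow> 'a::ring_1 set \<Rightarrow> 'a set \<Rightarrow> bool" where
  "kd_le 0 I J \<longleftrightarrow> J \<subseteq> I"
| "kd_le (Suc k) I J \<longleftrightarrow>
     (\<forall>C :: nat \<Rightarrow> 'a set. (\<forall>i. right_ideal (C i) \<and> I \<subseteq> C i \<and> C i \<subseteq> J \<and> C (Suc i) \<subseteq> C i)
        \<longrightarrow> (\<exists>N. \<forall>i\<ge>N. kd_le k (C (Suc i)) (C i)))"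

definition has_krull_dim :: "'a::ring_1 set \<Rightarrow> 'a set \<Rightarrow> bool" where
  "has_krull_dim I J \<longleftrightarrow> (\<exists>j. kd_le j I J)"

text \<open>Krull dimension of J/I as an integer (only meaningful when has_krull_dim I J).\<close>
definition krull_dim :: "'a::ring_1 set \<Rightarrow> 'a set \<Rightarrow> int" where
  "krull_dim I J = int (LEAST j. kd_le j I J) - 1"

text \<open>C(A): elements regular modulo A (left and right regular).\<close>
definition regular_mod :: "'a::ring_1 set \<Rightarrow> 'a set" where
  "regular_mod A = {c. (\<forall>x. x * c \<in> A \<longrightarrow> x \<in> A) \<and> (\<forall>x. c * x \<in> A \<longrightarrow> x \<in> A)}"

definition V_torsion_quot :: "'a::ring_1 set \<Rightarrow> 'a set \<Rightarrow> bool" where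
  "V_torsion_quot V I \<longleftrightarrow> (\<forall>x. \<exists>t\<in>V. x * t \<in> I)"

definition gabriel_filter :: "'a::ring_1 set set \<Rightarrow> bool" where
  "gabriel_filter F \<longleftrightarrow> (\<forall>I\<in>F. right_ideal I) \<and>
     (\<forall>I J. I \<in> F \<longrightarrow> right_ideal J \<longrightarrow> I \<subseteq> J \<longrightarrow> J \<in> F) \<and>
     (\<forall>I J. I \<in> F \<longrightarrow> J \<in> F \<longrightarrow> I \<inter> J \<in> F) \<and>
     (\<forall>I x. I \<in> F \<longrightarrow> {a. x * a \<in> I} \<in> F)"

definition right_intersection_condition :: "'a::ring_1 set set \<Rightarrow> 'a set \<Rightarrow> bool" where
  "right_intersection_condition X V \<longleftrightarrow>
     (\<forall>I. right_ideal I \<longrightarrow> (\<forall>p\<in>X. I \<inter> regular_mod p \<noteq> {}) \<longrightarrow> I \<inter> V \<noteq> {})"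

end

theory Submission
  imports Defs
begin


definition plus_set :: "'a::ring_1 set \<Rightarrow> 'a set \<Rightarrow> 'a set" where
  "plus_set A B = {a + b | a b. a \<in> A \<and> b \<in> B}"
definition lmul :: "'a::ring_1 \<Rightarrow> 'a set \<Rightarrow> 'a set" where
  "lmul x A = {x * a | a. a \<in> A}"

lemma ri_0: "right_ideal I \<Longrightarrow> 0 \<in> I" by (simp add: right_ideal_def)
lemma ri_add: "right_ideal I \<Longrightarrow> x \<in> I \<Longrightarrow> y \<in> I \<Longrightarrow> x + y \<in> I" by (simp add: right_ideal_def)
lemma ri_neg: "right_ideal I \<Longrightarrow> x \<in> I \<Longrightarrow> - x \<in> I" by (simp add: right_ideal_def)
lemma ri_mult: "right_ideal I \<Longrightarrow> x \<in> I \<Longrightarrow> x * r \<in> I" by (simp add: right_ideal_def)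
lemma ri_diff: "right_ideal I \<Longrightarrow> x \<in> I \<Longrightarrow> y \<in> I \<Longrightarrow> x - y \<in> I"
  using ri_add[of I x "-y"] ri_neg[of I y] by simp
lemma ri_diffD: "right_ideal I \<Longrightarrow> x - y \<in> I \<Longrightarrow> y \<in> I \<Longrightarrow> x \<in> I"
  using ri_add[of I "x-y" y] by simp
lemma ri_UNIV: "right_ideal UNIV" by (simp add: right_ideal_def)
lemma ri_Int: "right_ideal A \<Longrightarrow> right_ideal B \<Longrightarrow> right_ideal (A \<inter> B)"
  by (simp add: right_ideal_def)
lemma ri_pre: "right_ideal I \<Longrightarrow> right_ideal {a. x * a \<in> I}"
  unfolding right_ideal_def by (simp add: distrib_left mult.assoc[symmetric])
lemma ri_plus: assumes "right_ideal A" "right_ideal B" shows "right_ideal (plus_set A B)"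
  unfolding right_ideal_def plus_set_def
proof (intro conjI ballI allI)
  show "0 \<in> {a + b |a b. a \<in> A \<and> b \<in> B}" using ri_0[OF assms(1)] ri_0[OF assms(2)] by force
next
  fix x y assume "x \<in> {a + b |a b. a \<in> A \<and> b \<in> B}" "y \<in> {a + b |a b. a \<in> A \<and> b \<in> B}"
  then obtain a b a' b' where "x = a + b" "y = a'+b'" "a \<in> A" "b \<in> B" "a' \<in> A" "b' \<in> B" by blast
  then show "x + y \<in> {a + b |a b. a \<in> A \<and> b \<in> B}" using ri_add[OF assms(1)] ri_add[OF assms(2)]
    by (intro CollectI exI[of _ "a+a'"] exI[of _ "b+b'"]) (auto simp: algebra_simps)
next
  fix x assume "x \<in> {a + b |a b. a \<in> A \<and> b \<in> B}"
  then obtain a b where "x = a + b" "a \<in> A" "b \<in> B" by blast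
  then show "- x \<in> {a + b |a b. a \<in> A \<and> b \<in> B}" using ri_neg[OF assms(1)] ri_neg[OF assms(2)]
    by (intro CollectI exI[of _ "-a"] exI[of _ "-b"]) (auto simp: algebra_simps)
next
  fix x r assume "x \<in> {a + b |a b. a \<in> A \<and> b \<in> B}"
  then obtain a b where "x = a + b" "a \<in> A" "b \<in> B" by blast
  then show "x * r \<in> {a + b |a b. a \<in> A \<and> b \<in> B}" using ri_mult[OF assms(1)] ri_mult[OF assms(2)]
    by (intro CollectI exI[of _ "a*r"] exI[of _ "b*r"]) (auto simp: algebra_simps)
qed
lemma ri_lmul: assumes "right_ideal A" shows "right_ideal (lmul x A)"
  unfolding right_ideal_def lmul_def
proof (intro conjI ballI allI)
  show "0 \<in> {x * a |a. a \<in> A}" using ri_0[OF assms] by force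
next
  fix u v assume "u \<in> {x * a |a. a \<in> A}" "v \<in> {x * a |a. a \<in> A}"
  then show "u + v \<in> {x * a |a. a \<in> A}" using ri_add[OF assms] by (auto simp: distrib_left[symmetric])
next
  fix u assume "u \<in> {x * a |a. a \<in> A}"
  then obtain a where "u = x * a" "a \<in> A" by blast
  then show "- u \<in> {x * a |a. a \<in> A}" using ri_neg[OF assms]
    by (intro CollectI exI[of _ "-a"]) simp
next
  fix u r assume "u \<in> {x * a |a. a \<in> A}"
  then show "u * r \<in> {x * a |a. a \<in> A}" using ri_mult[OF assms] by (auto simp: mult.assoc)
qed

lemma plus_setI: "a \<in> A \<Longrightarrow> b \<in> B \<Longrightarrow> a + b \<in> plus_set A B" by (auto simp: plus_set_def)
lemma plus_setE: "x \<in> plus_set A B \<Longrightarrow> (\<And>a b. x = a + b \<Longrightarrow> a \<in> A \<Longrightarrow> b \<in> B \<Longrightarrow> P) \<Longrightarrow> P"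
  by (auto simp: plus_set_def)
lemma lmulI: "a \<in> A \<Longrightarrow> x * a \<in> lmul x A" by (auto simp: lmul_def)
lemma lmulE: "u \<in> lmul x A \<Longrightarrow> (\<And>a. u = x * a \<Longrightarrow> a \<in> A \<Longrightarrow> P) \<Longrightarrow> P"
  by (auto simp: lmul_def)
lemma plus_left: "right_ideal B \<Longrightarrow> A \<subseteq> plus_set A B"
  using plus_setI[of _ A 0 B] ri_0 by fastforce
lemma plus_right: "right_ideal A \<Longrightarrow> B \<subseteq> plus_set A B"
  using plus_setI[of 0 A _ B] ri_0 by fastforce
lemma plus_sub: "right_ideal C \<Longrightarrow> A \<subseteq> C \<Longrightarrow> B \<subseteq> C \<Longrightarrow> plus_set A B \<subseteq> C"
  by (auto elim!: plus_setE intro: ri_add)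
lemma plus_mono: "A \<subseteq> A' \<Longrightarrow> B \<subseteq> B' \<Longrightarrow> plus_set A B \<subseteq> plus_set A' B'"
  by (auto simp: plus_set_def)
lemma lmul_mono: "A \<subseteq> A' \<Longrightarrow> lmul x A \<subseteq> lmul x A'"
  by (auto simp: lmul_def)


definition embeds :: "('a set \<Rightarrow> 'a set) \<Rightarrow> 'a set \<Rightarrow> 'a set \<Rightarrow> 'a::ring_1 set \<Rightarrow> 'a set \<Rightarrow> bool" where
  "embeds f I' J' I J \<longleftrightarrow>
    (\<forall>A. right_ideal A \<and> I' \<subseteq> A \<and> A \<subseteq> J' \<longrightarrow> right_ideal (f A) \<and> I \<subseteq> f A \<and> f A \<subseteq> J) \<and>
    (\<forall>A B. right_ideal A \<and> I' \<subseteq> A \<and> A \<subseteq> J' \<longrightarrow> right_ideal B \<and> I' \<subseteq> B \<and> B \<subseteq> J'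
       \<longrightarrow> (A \<subseteq> B \<longleftrightarrow> f A \<subseteq> f B))"

lemma embedsI:
  assumes "\<And>A. right_ideal A \<Longrightarrow> I' \<subseteq> A \<Longrightarrow> A \<subseteq> J' \<Longrightarrow> right_ideal (f A) \<and> I \<subseteq> f A \<and> f A \<subseteq> J"
    and "\<And>A B. right_ideal A \<Longrightarrow> I' \<subseteq> A \<Longrightarrow> A \<subseteq> J' \<Longrightarrow> right_ideal B \<Longrightarrow> I' \<subseteq> B \<Longrightarrow> B \<subseteq> J'
       \<Longrightarrow> A \<subseteq> B \<Longrightarrow> f A \<subseteq> f B"
    and "\<And>A B. right_ideal A \<Longrightarrow> I' \<subseteq> A \<Longrightarrow> A \<subseteq> J' \<Longrightarrow> right_ideal B \<Longrightarrow> I' \<subseteq> B \<Longrightarrow> B \<subseteq> J'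
       \<Longrightarrow> f A \<subseteq> f B \<Longrightarrow> A \<subseteq> B"
  shows "embeds f I' J' I J"
  unfolding embeds_def
proof (intro conjI allI impI)
  fix A assume "right_ideal A \<and> I' \<subseteq> A \<and> A \<subseteq> J'"
  then show "right_ideal (f A)" "I \<subseteq> f A" "f A \<subseteq> J" using assms(1) by auto
next
  fix A B assume a: "right_ideal A \<and> I' \<subseteq> A \<and> A \<subseteq> J'" and b: "right_ideal B \<and> I' \<subseteq> B \<and> B \<subseteq> J'"
  show "A \<subseteq> B \<longleftrightarrow> f A \<subseteq> f B"
  proof
    assume "A \<subseteq> B" then show "f A \<subseteq> f B" using assms(2) a b by blast
  next
    assume "f A \<subseteq> f B" then show "A \<subseteq> B" using assms(3) a b by blast
  qed
qed

lemma kd_SucD: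
  assumes "kd_le (Suc k) I J" "\<forall>i. right_ideal (C i) \<and> I \<subseteq> C i \<and> C i \<subseteq> J \<and> C (Suc i) \<subseteq> C i"
  shows "\<exists>N. \<forall>i\<ge>N. kd_le k (C (Suc i)) (C i)"
proof -
  have "\<forall>C. (\<forall>i. right_ideal (C i) \<and> I \<subseteq> C i \<and> C i \<subseteq> J \<and> C (Suc i) \<subseteq> C i)
     \<longrightarrow> (\<exists>N. \<forall>i\<ge>N. kd_le k (C (Suc i)) (C i))" using assms(1) by (simp only: kd_le.simps(2))
  then show ?thesis using assms(2) by blast
qed

lemma embedsD1:
  assumes "embeds f I' J' I J" "right_ideal A" "I' \<subseteq> A" "A \<subseteq> J'"
  shows "right_ideal (f A) \<and> I \<subseteq> f A \<and> f A \<subseteq> J"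
proof -
  have "\<forall>A. right_ideal A \<and> I' \<subseteq> A \<and> A \<subseteq> J' \<longrightarrow> right_ideal (f A) \<and> I \<subseteq> f A \<and> f A \<subseteq> J"
    using assms(1) unfolding embeds_def by (rule conjunct1)
  then show ?thesis using assms(2-4) by simp
qed

lemma embedsD2:
  assumes "embeds f I' J' I J" "right_ideal A" "I' \<subseteq> A" "A \<subseteq> J'" "right_ideal B" "I' \<subseteq> B" "B \<subseteq> J'"
  shows "A \<subseteq> B \<longleftrightarrow> f A \<subseteq> f B"
proof -
  have "\<forall>A B. right_ideal A \<and> I' \<subseteq> A \<and> A \<subseteq> J' \<longrightarrow> right_ideal B \<and> I' \<subseteq> B \<and> B \<subseteq> J'
       \<longrightarrow> (A \<subseteq> B \<longleftrightarrow> f A \<subseteq> f B)"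
    using assms(1) unfolding embeds_def by (rule conjunct2)
  then show ?thesis using assms(2-7) by simp
qed

lemma kd_embed:
  "kd_le j I J \<Longrightarrow> embeds f I' J' I J \<Longrightarrow> right_ideal I' \<Longrightarrow> right_ideal J' \<Longrightarrow> I' \<subseteq> J'
   \<Longrightarrow> kd_le j I' J'"
proof (induction j arbitrary: I J I' J')
  case 0
  note E1 = embedsD1[OF "0.prems"(2)]
  note E2 = embedsD2[OF "0.prems"(2)]
  have "f J' \<subseteq> J" using E1[of J'] "0.prems" by blast
  moreover have "I \<subseteq> f I'" using E1[of I'] "0.prems" by blast
  moreover have "J \<subseteq> I" using "0.prems"(1) by simp
  ultimately have "f J' \<subseteq> f I'" by blast
  then have "J' \<subseteq> I'" using E2[of J' I'] "0.prems" by blast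
  then show ?case by simp
next
  case (Suc k)
  note E1 = embedsD1[OF Suc.prems(2)]
  note E2 = embedsD2[OF Suc.prems(2)]
  show ?case
  proof (subst kd_le.simps(2), intro allI impI)
    fix C :: "nat \<Rightarrow> _" assume hC: "\<forall>i. right_ideal (C i) \<and> I' \<subseteq> C i \<and> C i \<subseteq> J' \<and> C (Suc i) \<subseteq> C i"
    define D where "D i = f (C i)" for i
    have hD: "\<forall>i. right_ideal (D i) \<and> I \<subseteq> D i \<and> D i \<subseteq> J \<and> D (Suc i) \<subseteq> D i"
    proof
      fix i
      have a: "right_ideal (C i) \<and> I' \<subseteq> C i \<and> C i \<subseteq> J'" using hC by blast
      have b: "right_ideal (C (Suc i)) \<and> I' \<subseteq> C (Suc i) \<and> C (Suc i) \<subseteq> J' \<and> C (Suc i) \<subseteq> C i" using hC by blast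
      show "right_ideal (D i) \<and> I \<subseteq> D i \<and> D i \<subseteq> J \<and> D (Suc i) \<subseteq> D i"
        unfolding D_def using E1[of "C i"] E2[of "C (Suc i)" "C i"] a b by blast
    qed
    have P1: "\<And>Y. (\<forall>i. right_ideal (Y i) \<and> I \<subseteq> Y i \<and> Y i \<subseteq> J \<and> Y (Suc i) \<subseteq> Y i)
       \<Longrightarrow> \<exists>N. \<forall>i\<ge>N. kd_le k (Y (Suc i)) (Y i)"
      using Suc.prems(1) by (rule kd_SucD)
    obtain N where N: "\<forall>i\<ge>N. kd_le k (D (Suc i)) (D i)" using P1[OF hD] by blast
    have "kd_le k (C (Suc i)) (C i)" if "i \<ge> N" for i
    proof -
      have k1: "kd_le k (D (Suc i)) (D i)" using N that by blast
      have r: "right_ideal (C (Suc i))" "right_ideal (C i)" "C (Suc i) \<subseteq> C i" using hC by blast+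
      have "embeds f (C (Suc i)) (C i) (D (Suc i)) (D i)"
        unfolding embeds_def D_def
      proof (intro conjI allI impI)
        fix A assume A: "right_ideal A \<and> C (Suc i) \<subseteq> A \<and> A \<subseteq> C i"
        have AI: "right_ideal A \<and> I' \<subseteq> A \<and> A \<subseteq> J'" using A hC[rule_format, of i] hC[rule_format, of "Suc i"] by blast
        have c1: "right_ideal (C (Suc i)) \<and> I' \<subseteq> C (Suc i) \<and> C (Suc i) \<subseteq> J'" using hC by blast
        have c2: "right_ideal (C i) \<and> I' \<subseteq> C i \<and> C i \<subseteq> J'" using hC by blast
        show "right_ideal (f A)" using E1[of A] AI by blast
        show "f (C (Suc i)) \<subseteq> f A" using E2[of "C (Suc i)" A] AI A c1 by blast
        show "f A \<subseteq> f (C i)" using E2[of A "C i"] AI A c2 by blast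
      next
        fix A B assume A: "right_ideal A \<and> C (Suc i) \<subseteq> A \<and> A \<subseteq> C i"
          and B: "right_ideal B \<and> C (Suc i) \<subseteq> B \<and> B \<subseteq> C i"
        have AI: "right_ideal A \<and> I' \<subseteq> A \<and> A \<subseteq> J'" using A hC[rule_format, of i] hC[rule_format, of "Suc i"] by blast
        have BI: "right_ideal B \<and> I' \<subseteq> B \<and> B \<subseteq> J'" using B hC[rule_format, of i] hC[rule_format, of "Suc i"] by blast
        show "A \<subseteq> B \<longleftrightarrow> f A \<subseteq> f B" using E2[of A B] AI BI by blast
      qed
      then show ?thesis using Suc.IH[OF k1 _ r] by blast
    qed
    then show "\<exists>N. \<forall>i\<ge>N. kd_le k (C (Suc i)) (C i)" by blast
  qed
qed

lemma kd_sub: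
  "kd_le j I J \<Longrightarrow> right_ideal I' \<Longrightarrow> right_ideal J' \<Longrightarrow> I \<subseteq> I' \<Longrightarrow> I' \<subseteq> J' \<Longrightarrow> J' \<subseteq> J
   \<Longrightarrow> kd_le j I' J'"
  by (rule kd_embed[where f=id]) (auto simp: embeds_def)

lemma kd_Suc: "kd_le j I J \<Longrightarrow> kd_le (Suc j) I J"
proof (induction j arbitrary: I J)
  case 0
  show ?case
  proof (subst kd_le.simps(2), intro allI impI)
    fix C :: "nat \<Rightarrow> _" assume hC: "\<forall>i. right_ideal (C i) \<and> I \<subseteq> C i \<and> C i \<subseteq> J \<and> C (Suc i) \<subseteq> C i"
    have "J \<subseteq> I" using 0 by simp
    then have "\<forall>i. C i = I" using hC by blast
    then show "\<exists>N. \<forall>i\<ge>N. kd_le 0 (C (Suc i)) (C i)" by simp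
  qed
next
  case (Suc k)
  show ?case
  proof (subst kd_le.simps(2), intro allI impI)
    fix C :: "nat \<Rightarrow> _" assume hC: "\<forall>i. right_ideal (C i) \<and> I \<subseteq> C i \<and> C i \<subseteq> J \<and> C (Suc i) \<subseteq> C i"
    from Suc.prems hC obtain N where "\<forall>i\<ge>N. kd_le k (C (Suc i)) (C i)"
      unfolding kd_le.simps(2) by blast
    then show "\<exists>N. \<forall>i\<ge>N. kd_le (Suc k) (C (Suc i)) (C i)" using Suc.IH by blast
  qed
qed

lemma kd_mono: assumes "kd_le j I J" "j \<le> j'" shows "kd_le j' I J"
  using assms(2)
proof (induction j' rule: dec_induct)
  case base then show ?case using assms(1) .
next
  case (step n) then show ?case using kd_Suc by blast
qed

lemma kd_ext:
  "kd_le j A B \<Longrightarrow> kd_le j B C \<Longrightarrow> right_ideal A \<Longrightarrow> right_ideal B \<Longrightarrow> right_ideal C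
   \<Longrightarrow> A \<subseteq> B \<Longrightarrow> B \<subseteq> C \<Longrightarrow> kd_le j A C"
proof (induction j arbitrary: A B C)
  case 0
  then show ?case by auto
next
  case (Suc k)
  show ?case
  proof (subst kd_le.simps(2), intro allI impI)
    fix X :: "nat \<Rightarrow> _" assume hX: "\<forall>i. right_ideal (X i) \<and> A \<subseteq> X i \<and> X i \<subseteq> C \<and> X (Suc i) \<subseteq> X i"
    have h1: "\<forall>i. right_ideal (X i \<inter> B) \<and> A \<subseteq> X i \<inter> B \<and> X i \<inter> B \<subseteq> B \<and> X (Suc i) \<inter> B \<subseteq> X i \<inter> B"
    proof
      fix i
      have "right_ideal (X i)" "A \<subseteq> X i" "X (Suc i) \<subseteq> X i" using hX by auto
      then show "right_ideal (X i \<inter> B) \<and> A \<subseteq> X i \<inter> B \<and> X i \<inter> B \<subseteq> B \<and> X (Suc i) \<inter> B \<subseteq> X i \<inter> B"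
        using Suc.prems(4,6) ri_Int by blast
    qed
    have h2: "\<forall>i. right_ideal (plus_set (X i) B) \<and> B \<subseteq> plus_set (X i) B \<and> plus_set (X i) B \<subseteq> C
        \<and> plus_set (X (Suc i)) B \<subseteq> plus_set (X i) B"
    proof
      fix i
      have x: "right_ideal (X i)" "X i \<subseteq> C" "X (Suc i) \<subseteq> X i" using hX by blast+
      show "right_ideal (plus_set (X i) B) \<and> B \<subseteq> plus_set (X i) B \<and> plus_set (X i) B \<subseteq> C
        \<and> plus_set (X (Suc i)) B \<subseteq> plus_set (X i) B"
        using ri_plus[OF x(1) Suc.prems(4)] plus_right[OF x(1), of B] plus_sub[OF Suc.prems(5) x(2) Suc.prems(7)]
          plus_mono[OF x(3) order.refl] by blast
    qed
    have P1: "\<And>Y. (\<forall>i. right_ideal (Y i) \<and> A \<subseteq> Y i \<and> Y i \<subseteq> B \<and> Y (Suc i) \<subseteq> Y i)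
       \<Longrightarrow> \<exists>N. \<forall>i\<ge>N. kd_le k (Y (Suc i)) (Y i)"
      using Suc.prems(1) by (rule kd_SucD)
    have P2: "\<And>Y. (\<forall>i. right_ideal (Y i) \<and> B \<subseteq> Y i \<and> Y i \<subseteq> C \<and> Y (Suc i) \<subseteq> Y i)
       \<Longrightarrow> \<exists>N. \<forall>i\<ge>N. kd_le k (Y (Suc i)) (Y i)"
      using Suc.prems(2) by (rule kd_SucD)
    obtain N1 where N1: "\<forall>i\<ge>N1. kd_le k (X (Suc i) \<inter> B) (X i \<inter> B)"
      using P1[of "\<lambda>i. X i \<inter> B"] h1 by blast
    obtain N2 where N2: "\<forall>i\<ge>N2. kd_le k (plus_set (X (Suc i)) B) (plus_set (X i) B)"
      using P2[of "\<lambda>i. plus_set (X i) B"] h2 by blast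
    have "kd_le k (X (Suc i)) (X i)" if i: "i \<ge> max N1 N2" for i
    proof -
      define D where "D = plus_set (X i \<inter> B) (X (Suc i))"
      have rX: "right_ideal (X i)" "right_ideal (X (Suc i))" "X (Suc i) \<subseteq> X i" using hX by blast+
      have rB: "right_ideal B" by fact
      have rD: "right_ideal D" unfolding D_def using rX rB by (intro ri_plus ri_Int) auto
      have D1: "X (Suc i) \<subseteq> D" unfolding D_def using rX rB by (intro plus_right ri_Int) auto
      have D2: "D \<subseteq> X i" unfolding D_def using rX by (intro plus_sub) auto
      have k1: "kd_le k (X (Suc i)) D"
      proof (rule kd_embed[where f="\<lambda>Y. Y \<inter> B"])
        show "kd_le k (X (Suc i) \<inter> B) (X i \<inter> B)" using N1 i by auto
        show "embeds (\<lambda>Y. Y \<inter> B) (X (Suc i)) D (X (Suc i) \<inter> B) (X i \<inter> B)"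
        proof (rule embedsI)
          fix Y assume "right_ideal Y" "X (Suc i) \<subseteq> Y" "Y \<subseteq> D"
          then show "right_ideal (Y \<inter> B) \<and> X (Suc i) \<inter> B \<subseteq> Y \<inter> B \<and> Y \<inter> B \<subseteq> X i \<inter> B"
            using ri_Int rB D2 by blast
        next
          fix Y Z show "Y \<subseteq> Z \<Longrightarrow> Y \<inter> B \<subseteq> Z \<inter> B" by blast
        next
          fix Y Z assume Y: "right_ideal Y" "X (Suc i) \<subseteq> Y" "Y \<subseteq> D"
            and Z: "right_ideal Z" "X (Suc i) \<subseteq> Z" "Z \<subseteq> D" and YZ: "Y \<inter> B \<subseteq> Z \<inter> B"
          show "Y \<subseteq> Z"
          proof
            fix y assume y: "y \<in> Y"
            then have "y \<in> D" using Y by blast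
            then obtain u v where uv: "y = u + v" "u \<in> X i \<inter> B" "v \<in> X (Suc i)"
              unfolding D_def by (auto elim: plus_setE)
            have "v \<in> Y" using uv Y by blast
            then have "y - v \<in> Y" using ri_diff[OF Y(1) y] by blast
            moreover have "u = y - v" using uv by simp
            ultimately have "u \<in> Y" by simp
            then have "u \<in> Z" using YZ uv by blast
            then show "y \<in> Z" using uv Z ri_add by blast
          qed
        qed
      qed (use rX rD D1 in auto)
      have k2: "kd_le k D (X i)"
      proof (rule kd_embed[where f="\<lambda>Y. plus_set Y B"])
        show "kd_le k (plus_set (X (Suc i)) B) (plus_set (X i) B)" using N2 i by auto
        show "embeds (\<lambda>Y. plus_set Y B) D (X i) (plus_set (X (Suc i)) B) (plus_set (X i) B)"
        proof (rule embedsI)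
          fix Y assume Y: "right_ideal Y" "D \<subseteq> Y" "Y \<subseteq> X i"
          have "X (Suc i) \<subseteq> Y" using Y D1 by blast
          then show "right_ideal (plus_set Y B) \<and> plus_set (X (Suc i)) B \<subseteq> plus_set Y B
             \<and> plus_set Y B \<subseteq> plus_set (X i) B"
            using ri_plus[OF Y(1) rB] plus_mono[OF _ order.refl] Y(3) by blast
        next
          fix Y Z show "Y \<subseteq> Z \<Longrightarrow> plus_set Y B \<subseteq> plus_set Z B" by (rule plus_mono) auto
        next
          fix Y Z assume Y: "right_ideal Y" "D \<subseteq> Y" "Y \<subseteq> X i"
            and Z: "right_ideal Z" "D \<subseteq> Z" "Z \<subseteq> X i" and YZ: "plus_set Y B \<subseteq> plus_set Z B"
          show "Y \<subseteq> Z"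
          proof
            fix y assume y: "y \<in> Y"
            then have "y \<in> plus_set Y B" using plus_left rB by blast
            then have "y \<in> plus_set Z B" using YZ by blast
            then obtain z b where zb: "y = z + b" "z \<in> Z" "b \<in> B" by (auto elim: plus_setE)
            have "y \<in> X i" "z \<in> X i" using y zb Y Z by blast+
            then have "y - z \<in> X i" using ri_diff[OF rX(1)] by blast
            moreover have "b = y - z" using zb by simp
            ultimately have "b \<in> X i" by simp
            then have "b + 0 \<in> D" unfolding D_def using zb rX ri_0 by (intro plus_setI) auto
            then have "b \<in> D" by simp
            then show "y \<in> Z" using zb Z ri_add by blast
          qed
        qed
      qed (use rX rD D2 in auto)
      show ?thesis using Suc.IH[OF k1 k2 rX(2) rD rX(1) D1 D2] .
    qed
    then show "\<exists>N. \<forall>i\<ge>N. kd_le k (X (Suc i)) (X i)" by blast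
  qed
qed

lemma kd_plus:
  assumes "kd_le j Q A" "kd_le j Q B" "right_ideal Q" "right_ideal A" "right_ideal B" "Q \<subseteq> A" "Q \<subseteq> B"
  shows "kd_le j Q (plus_set A B)"
proof -
  have rAB: "right_ideal (plus_set A B)" using assms by (intro ri_plus)
  have AAB: "A \<subseteq> plus_set A B" using plus_left[OF assms(5)] .
  have "kd_le j A (plus_set A B)"
  proof (rule kd_embed[where f="\<lambda>Y. Y \<inter> B"])
    show "kd_le j Q B" by fact
    show "embeds (\<lambda>Y. Y \<inter> B) A (plus_set A B) Q B"
    proof (rule embedsI)
      fix Y assume "right_ideal Y" "A \<subseteq> Y" "Y \<subseteq> plus_set A B"
      then show "right_ideal (Y \<inter> B) \<and> Q \<subseteq> Y \<inter> B \<and> Y \<inter> B \<subseteq> B"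
        using assms ri_Int by blast
    next
      fix Y Z show "Y \<subseteq> Z \<Longrightarrow> Y \<inter> B \<subseteq> Z \<inter> B" by blast
    next
      fix Y Z assume Y: "right_ideal Y" "A \<subseteq> Y" "Y \<subseteq> plus_set A B"
        and Z: "right_ideal Z" "A \<subseteq> Z" "Z \<subseteq> plus_set A B" and YZ: "Y \<inter> B \<subseteq> Z \<inter> B"
      show "Y \<subseteq> Z"
      proof
        fix y assume y: "y \<in> Y"
        have "y \<in> plus_set A B" using Y y by blast
        then obtain a b where ab: "y = a + b" "a \<in> A" "b \<in> B" by (rule plus_setE)
        have "y - a \<in> Y" using ri_diff[OF Y(1) y] ab(2) Y(2) by blast
        moreover have "b = y - a" using ab by simp
        ultimately have "b \<in> Y" by simp
        then have "b \<in> Z" using YZ ab by blast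
        then show "y \<in> Z" using ab Z ri_add by blast
      qed
    qed
  qed (use rAB assms AAB in auto)
  then show ?thesis using kd_ext[OF assms(1) _ assms(3) assms(4) rAB assms(6) AAB] by blast
qed

lemma kd_Int:
  assumes "kd_le j A UNIV" "kd_le j B UNIV" "right_ideal A" "right_ideal B"
  shows "kd_le j (A \<inter> B) UNIV"
proof -
  have "kd_le j (A \<inter> B) A"
  proof (rule kd_embed[where f="\<lambda>Y. plus_set Y B"])
    show "kd_le j B UNIV" by fact
    show "embeds (\<lambda>Y. plus_set Y B) (A \<inter> B) A B UNIV"
    proof (rule embedsI)
      fix Y assume "right_ideal Y" "A \<inter> B \<subseteq> Y" "Y \<subseteq> A"
      then show "right_ideal (plus_set Y B) \<and> B \<subseteq> plus_set Y B \<and> plus_set Y B \<subseteq> UNIV"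
        using assms by (auto intro!: ri_plus plus_right)
    next
      fix Y Z show "Y \<subseteq> Z \<Longrightarrow> plus_set Y B \<subseteq> plus_set Z B" by (rule plus_mono) auto
    next
      fix Y Z assume Y: "right_ideal Y" "A \<inter> B \<subseteq> Y" "Y \<subseteq> A"
        and Z: "right_ideal Z" "A \<inter> B \<subseteq> Z" "Z \<subseteq> A" and YZ: "plus_set Y B \<subseteq> plus_set Z B"
      show "Y \<subseteq> Z"
      proof
        fix y assume y: "y \<in> Y"
        then have "y \<in> plus_set Z B" using YZ plus_left assms by blast
        then obtain z b where zb: "y = z + b" "z \<in> Z" "b \<in> B" by (auto elim: plus_setE)
        have "y - z \<in> A" using ri_diff[OF assms(3)] y zb Y Z by blast
        moreover have "b = y - z" using zb by simp
        ultimately have "b \<in> A" by simp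
        then show "y \<in> Z" using zb Z ri_add by blast
      qed
    qed
  qed (use assms ri_Int in auto)
  then show ?thesis using kd_ext[OF _ assms(1) ri_Int[OF assms(3,4)] assms(3) ri_UNIV] by blast
qed



lemma ts_left: "two_sided_ideal P \<Longrightarrow> x \<in> P \<Longrightarrow> r * x \<in> P" by (simp add: two_sided_ideal_def)
lemma ts_ri: "two_sided_ideal P \<Longrightarrow> right_ideal P" by (simp add: two_sided_ideal_def)

lemma prime_elem:
  assumes P: "prime_ideal P" and h: "\<forall>r. x * r * y \<in> P"
  shows "x \<in> P \<or> y \<in> P"
proof -
  have tP: "two_sided_ideal P" using P by (simp add: prime_ideal_def)
  have rP: "right_ideal P" using tP ts_ri by blast
  define A where "A = {a. \<forall>r t. a * r * y * t \<in> P}"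
  define B where "B = {b. \<forall>a\<in>A. a * b \<in> P}"
  have tA: "two_sided_ideal A"
    unfolding two_sided_ideal_def right_ideal_def
  proof (intro conjI ballI allI)
    show "0 \<in> A" unfolding A_def using ri_0[OF rP] by simp
  next
    fix u v assume "u \<in> A" "v \<in> A"
    then show "u + v \<in> A" unfolding A_def using ri_add[OF rP] by (simp add: distrib_right)
  next
    fix u assume "u \<in> A"
    then show "- u \<in> A" unfolding A_def using ri_neg[OF rP] by simp
  next
    fix u r assume u: "u \<in> A"
    show "u * r \<in> A" unfolding A_def
    proof (intro CollectI allI)
      fix r' t have "u * (r * r') * y * t \<in> P" using u unfolding A_def by blast
      then show "u * r * r' * y * t \<in> P" by (simp add: mult.assoc)
    qed
  next
    fix u r assume u: "u \<in> A"
    show "r * u \<in> A" unfolding A_def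
    proof (intro CollectI allI)
      fix r' t have "u * r' * y * t \<in> P" using u unfolding A_def by blast
      then have "r * (u * r' * y * t) \<in> P" by (rule ts_left[OF tP])
      then show "r * u * r' * y * t \<in> P" by (simp add: mult.assoc)
    qed
  qed
  have tB: "two_sided_ideal B"
    unfolding two_sided_ideal_def right_ideal_def
  proof (intro conjI ballI allI)
    show "0 \<in> B" unfolding B_def using ri_0[OF rP] by simp
  next
    fix u v assume "u \<in> B" "v \<in> B"
    then show "u + v \<in> B" unfolding B_def using ri_add[OF rP] by (simp add: distrib_left)
  next
    fix u assume "u \<in> B"
    then show "- u \<in> B" unfolding B_def using ri_neg[OF rP] by simp
  next
    fix u r assume "u \<in> B"
    then show "u * r \<in> B" unfolding B_def using ri_mult[OF rP] by (simp add: mult.assoc[symmetric])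
  next
    fix u r assume u: "u \<in> B"
    have "a * r \<in> A" if aA: "a \<in> A" for a unfolding A_def
    proof (intro CollectI allI)
      fix r' t have "a * (r * r') * y * t \<in> P" using aA unfolding A_def by blast
      then show "a * r * r' * y * t \<in> P" by (simp add: mult.assoc)
    qed
    then show "r * u \<in> B" using u unfolding B_def by (simp add: mult.assoc[symmetric])
  qed
  have AB: "\<forall>a\<in>A. \<forall>b\<in>B. a * b \<in> P" unfolding B_def by blast
  have xA: "x \<in> A" unfolding A_def using h ri_mult[OF rP] by blast
  have yB: "y \<in> B" unfolding B_def
  proof (intro CollectI ballI)
    fix a assume "a \<in> A"
    then have "a * 1 * y * 1 \<in> P" unfolding A_def by blast
    then show "a * y \<in> P" by simp
  qed
  have "\<forall>A B. two_sided_ideal A \<longrightarrow> two_sided_ideal B \<longrightarrow> (\<forall>a\<in>A. \<forall>b\<in>B. a * b \<in> P)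
        \<longrightarrow> A \<subseteq> P \<or> B \<subseteq> P" using P unfolding prime_ideal_def by blast
  then have "A \<subseteq> P \<or> B \<subseteq> P" using tA tB AB by blast
  then show ?thesis using xA yB by blast
qed

lemma noeth_max:
  assumes N: "right_noetherian TYPE('a::ring_1)" and ne: "F \<noteq> {}"
    and ri: "\<forall>A\<in>F. right_ideal (A :: 'a set)"
  shows "\<exists>M\<in>F. \<forall>A\<in>F. M \<subseteq> A \<longrightarrow> A = M"
proof (rule ccontr)
  assume "\<not> ?thesis"
  then have step: "\<forall>M\<in>F. \<exists>A\<in>F. M \<subset> A" by blast
  obtain M0 where M0: "M0 \<in> F" using ne by blast
  define nxt where "nxt M = (SOME A. A \<in> F \<and> M \<subset> A)" for M
  have nxt: "nxt M \<in> F \<and> M \<subset> nxt M" if MF: "M \<in> F" for M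
  proof -
    have "\<exists>A. A \<in> F \<and> M \<subset> A" using step MF by blast
    then show ?thesis unfolding nxt_def by (rule someI_ex)
  qed
  define C where "C n = (nxt ^^ n) M0" for n
  have CF: "C n \<in> F" for n
  proof (induction n)
    case 0 then show ?case using M0 by (simp add: C_def)
  next
    case (Suc n) then show ?case using nxt[of "C n"] by (simp add: C_def)
  qed
  have Cs: "C n \<subset> C (Suc n)" for n using nxt[OF CF[of n]] by (simp add: C_def)
  have r1: "\<forall>i. right_ideal (C i)" using CF ri by blast
  have r2: "\<forall>i. C i \<subseteq> C (Suc i)" using Cs by blast
  have "\<forall>C :: nat \<Rightarrow> 'a set. (\<forall>i. right_ideal (C i)) \<longrightarrow>
      (\<forall>i. C i \<subseteq> C (Suc i)) \<longrightarrow> (\<exists>N. \<forall>i\<ge>N. C i = C N)" using N unfolding right_noetherian_def .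
  then have "(\<forall>i. right_ideal (C i)) \<longrightarrow> (\<forall>i. C i \<subseteq> C (Suc i)) \<longrightarrow> (\<exists>N. \<forall>i\<ge>N. C i = C N)"
    by (rule spec)
  then have "\<exists>N. \<forall>i\<ge>N. C i = C N" using r1 r2 by blast
  then obtain n where hn: "\<forall>i\<ge>n. C i = C n" by blast
  have "n \<le> Suc n" by simp
  then have "C (Suc n) = C n" using hn by blast
  then show False using Cs[of n] by simp
qed

lemma pow_swap: "(s * a) ^ Suc n = s * (a * s) ^ n * (a::'a::ring_1)"
  by (induction n) (simp_all add: mult.assoc)
lemma pow_swap2: "(x * r) ^ n * x = x * (r * (x::'a::ring_1)) ^ n"
  by (induction n) (simp_all add: mult.assoc)

lemma nonnil:
  assumes N: "right_noetherian TYPE('a::ring_1)" and P: "prime_ideal P"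
    and rN: "right_ideal (Nd :: 'a set)" and PN: "P \<subseteq> Nd" and nP: "\<not> Nd \<subseteq> P"
  shows "\<exists>a\<in>Nd. \<forall>n. a ^ n \<notin> P"
proof (rule ccontr)
  assume "\<not> ?thesis"
  then have nil: "\<forall>a\<in>Nd. \<exists>n. a ^ n \<in> P" by blast
  have tP: "two_sided_ideal P" using P by (simp add: prime_ideal_def)
  have rP: "right_ideal P" using tP ts_ri by blast
  obtain a where a: "a \<in> Nd" "a \<notin> P" using nP by blast
  define L where "L = {s * a | s. True}"
  have Lnil: "\<exists>n. z ^ n \<in> P" if zL: "z \<in> L" for z
  proof -
    obtain s where z: "z = s * a" using zL unfolding L_def by blast
    have "a * s \<in> Nd" using ri_mult[OF rN a(1)] .
    then obtain n where "(a * s) ^ n \<in> P" using nil by blast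
    then have "s * (a * s) ^ n * a \<in> P" using ts_left[OF tP] ri_mult[OF rP] by blast
    then have "(s * a) ^ Suc n \<in> P" by (simp only: pow_swap)
    then show ?thesis using z by blast
  qed
  have Lleft: "r * z \<in> L" if "z \<in> L" for r z using that unfolding L_def by (auto simp: mult.assoc[symmetric])
  define F where "F = {{w. x * w \<in> P} | x. x \<in> L \<and> x \<notin> P}"
  have "1 * a \<in> L" unfolding L_def by blast
  then have "a \<in> L" by simp
  then have Fne: "F \<noteq> {}" using a unfolding F_def by blast
  have Fri: "\<forall>A\<in>F. right_ideal A" unfolding F_def using ri_pre[OF rP] by blast
  obtain M where M: "M \<in> F" "\<forall>A\<in>F. M \<subseteq> A \<longrightarrow> A = M" using noeth_max[OF N Fne Fri] by blast
  then obtain x where x: "M = {w. x * w \<in> P}" "x \<in> L" "x \<notin> P" unfolding F_def by blast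
  have xrx: "x * r * x \<in> P" for r
  proof (rule ccontr)
    assume nr: "x * r * x \<notin> P"
    have "r * x \<in> L" using Lleft x by blast
    then obtain n where "(r * x) ^ n \<in> P" using Lnil by blast
    then have "x * (r * x) ^ n \<in> P" using ts_left[OF tP] by blast
    then have "(x * r) ^ n * x \<in> P" by (simp only: pow_swap2)
    then have ex: "\<exists>j. (x * r) ^ j * x \<in> P" by blast
    obtain j where j: "(x * r) ^ j * x \<in> P" "\<forall>i<j. (x * r) ^ i * x \<notin> P"
      using exists_least_iff[THEN iffD1, OF ex] by blast
    have "j \<noteq> 0"
    proof
      assume "j = 0" then have "x \<in> P" using j(1) by simp
      then show False using x(3) by blast
    qed
    then obtain k where jk: "j = Suc k" by (cases j) auto
    define y where "y = (x * r) ^ k * x"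
    have yP: "y \<notin> P" using j jk y_def by auto
    have yL: "y \<in> L" using Lleft x y_def by blast
    have "{w. y * w \<in> P} \<in> F" unfolding F_def using yP yL by blast
    moreover have sub: "M \<subseteq> {w. y * w \<in> P}"
    proof
      fix w assume "w \<in> M" then have "x * w \<in> P" using x by blast
      then have "(x * r) ^ k * (x * w) \<in> P" by (rule ts_left[OF tP])
      then show "w \<in> {w. y * w \<in> P}" unfolding y_def by (simp add: mult.assoc)
    qed
    ultimately have eq: "{w. y * w \<in> P} = M" using M by blast
    have "y * (r * x) = (x * r) ^ Suc k * x" unfolding y_def
      by (simp only: power_Suc2 mult.assoc)
    then have "r * x \<in> {w. y * w \<in> P}" using j jk by simp
    then have "x * (r * x) \<in> P" using eq x by blast
    then show False using nr by (simp add: mult.assoc)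
  qed
  then have "x \<in> P \<or> x \<in> P" using prime_elem[OF P] by blast
  then show False using x by blast
qed



fun Dl :: "'a::ring_1 set \<Rightarrow> 'a list \<Rightarrow> 'a set" where
  "Dl P [] = UNIV"
| "Dl P (b # bs) = Dl P bs \<inter> {x. b * x \<in> P}"

fun Ul :: "'a::ring_1 set \<Rightarrow> 'a list \<Rightarrow> 'a set" where
  "Ul P [] = P"
| "Ul P (b # bs) = plus_set (Ul P bs) (lmul b UNIV)"

fun valid :: "'a::ring_1 set \<Rightarrow> 'a set \<Rightarrow> 'a list \<Rightarrow> bool" where
  "valid P E [] = True"
| "valid P E (b # bs) = (valid P E bs \<and> b \<in> E \<and> b \<in> Dl P bs \<and> b \<notin> P \<and> (\<forall>y. b * (b * y) \<in> P \<longrightarrow> b * y \<in> P))"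

lemma Dl_ri: "right_ideal P \<Longrightarrow> right_ideal (Dl P bs)"
  by (induction bs) (simp_all add: ri_UNIV ri_Int ri_pre)

lemma Dl_P: "two_sided_ideal P \<Longrightarrow> P \<subseteq> Dl P bs"
proof (induction bs)
  case Nil then show ?case by simp
next
  case (Cons b bs)
  have "b * x \<in> P" if "x \<in> P" for x using ts_left[OF Cons.prems that] .
  then show ?case using Cons by auto
qed

lemma Ul_ri: "right_ideal P \<Longrightarrow> right_ideal (Ul P bs)"
  by (induction bs) (simp_all add: ri_plus ri_lmul ri_UNIV)

lemma Ul_P: "right_ideal P \<Longrightarrow> P \<subseteq> Ul P bs"
proof (induction bs)
  case Nil then show ?case by simp
next
  case (Cons b bs)
  have "Ul P bs \<subseteq> Ul P (b # bs)" using plus_left[OF ri_lmul[OF ri_UNIV, of b]] by simp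
  then show ?case using Cons by blast
qed

lemma UD: assumes tP: "two_sided_ideal P" shows "valid P E bs \<Longrightarrow> Ul P bs \<inter> Dl P bs \<subseteq> P"
proof (induction bs)
  case Nil then show ?case by simp
next
  case (Cons b bs)
  have rP: "right_ideal P" using tP ts_ri by blast
  have rD: "right_ideal (Dl P bs)" using Dl_ri[OF rP] .
  have v: "valid P E bs" "b \<in> Dl P bs" "\<forall>y. b * (b * y) \<in> P \<longrightarrow> b * y \<in> P" using Cons.prems by auto
  show ?case
  proof
    fix u assume u: "u \<in> Ul P (b # bs) \<inter> Dl P (b # bs)"
    then have uU: "u \<in> plus_set (Ul P bs) (lmul b UNIV)" by simp
    then obtain u' w where uw: "u = u' + w" "u' \<in> Ul P bs" "w \<in> lmul b UNIV" by (rule plus_setE)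
    then obtain s where s: "w = b * s" by (auto elim: lmulE)
    have uD: "u \<in> Dl P bs" "b * u \<in> P" using u by auto
    have bsD: "b * s \<in> Dl P bs" using ri_mult[OF rD v(2)] .
    have "u - b * s \<in> Dl P bs" using ri_diff[OF rD uD(1) bsD] .
    moreover have "u' = u - b * s" using uw s by simp
    ultimately have u'D: "u' \<in> Dl P bs" by simp
    then have u'P: "u' \<in> P" using Cons.IH[OF v(1)] uw by blast
    have "b * u' \<in> P" using ts_left[OF tP u'P] .
    then have "b * u - b * u' \<in> P" using ri_diff[OF rP uD(2)] by blast
    moreover have "b * u - b * u' = b * (b * s)" using uw s by (simp add: distrib_left)
    ultimately have "b * s \<in> P" using v(3) by simp
    then show "u \<in> P" using uw s u'P ri_add[OF rP] by blast
  qed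
qed

lemma sumU: assumes rP: "right_ideal P" shows "sum_list bs * x \<in> Ul P bs"
proof (induction bs)
  case Nil then show ?case using ri_0[OF rP] by simp
next
  case (Cons b bs)
  have "sum_list bs * x + b * x \<in> plus_set (Ul P bs) (lmul b UNIV)"
    using Cons by (intro plus_setI lmulI) auto
  then show ?case by (simp add: distrib_right add.commute)
qed

lemma sumE: assumes rE: "right_ideal E" shows "valid P E bs \<Longrightarrow> sum_list bs \<in> E"
proof (induction bs)
  case Nil then show ?case using ri_0[OF rE] by simp
next
  case (Cons b bs) then show ?case using ri_add[OF rE] by simp
qed

lemma sumReg: assumes tP: "two_sided_ideal P"
  shows "valid P E bs \<Longrightarrow> sum_list bs * x \<in> P \<Longrightarrow> x \<in> Dl P bs"
proof (induction bs)
  case Nil then show ?case by simp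
next
  case (Cons b bs)
  have rP: "right_ideal P" using tP ts_ri by blast
  have rD: "right_ideal (Dl P bs)" using Dl_ri[OF rP] .
  have v: "valid P E bs" "b \<in> Dl P bs" using Cons.prems by auto
  have cx: "b * x + sum_list bs * x \<in> P" using Cons.prems(2) by (simp add: distrib_right)
  have bx: "b * x \<in> Dl P bs" using ri_mult[OF rD v(2)] .
  have cxD: "b * x + sum_list bs * x \<in> Dl P bs" using cx Dl_P[OF tP] by blast
  have "(b * x + sum_list bs * x) - b * x \<in> Dl P bs" using ri_diff[OF rD cxD bx] .
  then have sD: "sum_list bs * x \<in> Dl P bs" by simp
  have sU: "sum_list bs * x \<in> Ul P bs" using sumU[OF rP] .
  have sP: "sum_list bs * x \<in> P" using UD[OF tP v(1)] sD sU by blast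
  then have xD: "x \<in> Dl P bs" using Cons.IH[OF v(1)] by blast
  have "(b * x + sum_list bs * x) - sum_list bs * x \<in> P" using ri_diff[OF rP cx sP] .
  then have "b * x \<in> P" by simp
  then show ?case using xD by simp
qed

lemma goldie:
  assumes N: "right_noetherian TYPE('a::ring_1)" and P: "prime_ideal (P :: 'a set)"
    and rE: "right_ideal E" and PE: "P \<subseteq> E"
    and ess: "\<forall>K. right_ideal K \<longrightarrow> P \<subseteq> K \<longrightarrow> K \<inter> E \<subseteq> P \<longrightarrow> K \<subseteq> P"
  shows "\<exists>c\<in>E. \<forall>x. c * x \<in> P \<longrightarrow> x \<in> P"
proof -
  have tP: "two_sided_ideal P" using P by (simp add: prime_ideal_def)
  have rP: "right_ideal P" using tP ts_ri by blast
  define F where "F = {Ul P bs | bs. valid P E bs}"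
  have "Ul P [] \<in> F" unfolding F_def by (intro CollectI exI[of _ "[]"]) simp
  then have Fne: "F \<noteq> {}" by blast
  have Fri: "\<forall>A\<in>F. right_ideal A" unfolding F_def using Ul_ri[OF rP] by blast
  obtain M where M: "M \<in> F" "\<forall>A\<in>F. M \<subseteq> A \<longrightarrow> A = M" using noeth_max[OF N Fne Fri] by blast
  then obtain bs where bs: "M = Ul P bs" "valid P E bs" unfolding F_def by blast
  have DP: "Dl P bs \<subseteq> P"
  proof (rule ccontr)
    assume nDP: "\<not> Dl P bs \<subseteq> P"
    define Nd where "Nd = E \<inter> Dl P bs"
    have rD: "right_ideal (Dl P bs)" using Dl_ri[OF rP] .
    have rN: "right_ideal Nd" unfolding Nd_def using ri_Int[OF rE rD] .
    have PN: "P \<subseteq> Nd" unfolding Nd_def using PE Dl_P[OF tP] by blast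
    have nNP: "\<not> Nd \<subseteq> P"
    proof
      assume "Nd \<subseteq> P"
      then have "Dl P bs \<inter> E \<subseteq> P" unfolding Nd_def by blast
      then have "Dl P bs \<subseteq> P" using ess rD Dl_P[OF tP] by blast
      then show False using nDP by blast
    qed
    obtain a where a: "a \<in> Nd" "\<forall>n. a ^ n \<notin> P" using nonnil[OF N P rN PN nNP] by blast
    define Cc where "Cc i = {z. a ^ i * z \<in> P}" for i
    have r1: "\<forall>i. right_ideal (Cc i)" unfolding Cc_def using ri_pre[OF rP] by blast
    have r2: "\<forall>i. Cc i \<subseteq> Cc (Suc i)"
    proof (intro allI subsetI)
      fix i z assume "z \<in> Cc i"
      then have "a * (a ^ i * z) \<in> P" unfolding Cc_def using ts_left[OF tP] by blast
      then show "z \<in> Cc (Suc i)" unfolding Cc_def by (simp add: mult.assoc)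
    qed
    have "\<forall>C :: nat \<Rightarrow> 'a set. (\<forall>i. right_ideal (C i)) \<longrightarrow>
      (\<forall>i. C i \<subseteq> C (Suc i)) \<longrightarrow> (\<exists>N. \<forall>i\<ge>N. C i = C N)" using N unfolding right_noetherian_def .
    then have "(\<forall>i. right_ideal (Cc i)) \<longrightarrow> (\<forall>i. Cc i \<subseteq> Cc (Suc i)) \<longrightarrow> (\<exists>N. \<forall>i\<ge>N. Cc i = Cc N)"
      by (rule spec)
    then obtain N0 where N0: "\<forall>i\<ge>N0. Cc i = Cc N0" using r1 r2 by blast
    define b where "b = a ^ Suc N0"
    have powN: "a ^ Suc n \<in> Nd" for n
    proof (induction n)
      case 0 then show ?case using a(1) by simp
    next
      case (Suc n)
      have "a ^ Suc n * a \<in> Nd" using ri_mult[OF rN Suc] .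
      then show ?case by (simp only: power_Suc2)
    qed
    have bN: "b \<in> Nd" unfolding b_def using powN .
    have bP: "b \<notin> P" unfolding b_def using a(2) by blast
    have bb: "\<forall>y. b * (b * y) \<in> P \<longrightarrow> b * y \<in> P"
    proof (intro allI impI)
      fix y assume h: "b * (b * y) \<in> P"
      have "a ^ (Suc N0 + Suc N0) * y = b * (b * y)" unfolding b_def by (simp only: power_add mult.assoc)
      then have "a ^ (Suc N0 + Suc N0) * y \<in> P" using h by simp
      then have "y \<in> Cc (Suc N0 + Suc N0)" unfolding Cc_def by simp
      moreover have "Cc (Suc N0 + Suc N0) = Cc N0" "Cc (Suc N0) = Cc N0"
        using N0[rule_format, of "Suc N0 + Suc N0"] N0[rule_format, of "Suc N0"] by linarith+
      ultimately have "y \<in> Cc (Suc N0)" by simp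
      then show "b * y \<in> P" unfolding Cc_def b_def by simp
    qed
    have vb: "valid P E (b # bs)" using bs(2) bN bP bb unfolding Nd_def by simp
    then have "Ul P (b # bs) \<in> F" unfolding F_def by blast
    moreover have "M \<subseteq> Ul P (b # bs)" using bs(1) plus_left[OF ri_lmul[OF ri_UNIV, of b]] by simp
    ultimately have eq: "Ul P (b # bs) = M" using M(2) by blast
    have "0 + b * 1 \<in> plus_set (Ul P bs) (lmul b UNIV)"
      using ri_0[OF Ul_ri[OF rP]] by (intro plus_setI lmulI) auto
    then have "b \<in> Ul P (b # bs)" by simp
    then have "b \<in> Ul P bs" using eq bs(1) by simp
    moreover have "b \<in> Dl P bs" using bN unfolding Nd_def by blast
    ultimately have "b \<in> P" using UD[OF tP bs(2)] by blast
    then show False using bP by blast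
  qed
  show ?thesis
  proof (intro bexI allI impI)
    show "sum_list bs \<in> E" using sumE[OF rE bs(2)] .
    fix x assume "sum_list bs * x \<in> P"
    then have "x \<in> Dl P bs" using sumReg[OF tP bs(2)] by blast
    then show "x \<in> P" using DP by blast
  qed
qed



lemma psi_embeds:
  assumes rQ: "right_ideal Q" and rA0: "right_ideal A0" and pre: "{a. x * a \<in> Q} \<subseteq> A0"
    and lo: "Lo \<subseteq> plus_set (lmul x A0) Q" and hi: "plus_set (lmul x UNIV) Q \<subseteq> Hi"
  shows "embeds (\<lambda>A. plus_set (lmul x A) Q) A0 UNIV Lo Hi"
proof (rule embedsI)
  fix A assume A: "right_ideal A" "A0 \<subseteq> A" "A \<subseteq> UNIV"
  have "plus_set (lmul x A0) Q \<subseteq> plus_set (lmul x A) Q" using A(2) by (intro plus_mono lmul_mono) auto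
  moreover have "plus_set (lmul x A) Q \<subseteq> plus_set (lmul x UNIV) Q" by (intro plus_mono lmul_mono) auto
  ultimately show "right_ideal (plus_set (lmul x A) Q) \<and> Lo \<subseteq> plus_set (lmul x A) Q \<and> plus_set (lmul x A) Q \<subseteq> Hi"
    using ri_plus[OF ri_lmul[OF A(1)] rQ] lo hi by blast
next
  fix A B :: "'a set" assume "A \<subseteq> B" then show "plus_set (lmul x A) Q \<subseteq> plus_set (lmul x B) Q"
    by (intro plus_mono lmul_mono) auto
next
  fix A B assume A: "right_ideal A" "A0 \<subseteq> A" "A \<subseteq> UNIV" and B: "right_ideal B" "A0 \<subseteq> B" "B \<subseteq> UNIV"
    and AB: "plus_set (lmul x A) Q \<subseteq> plus_set (lmul x B) Q"
  show "A \<subseteq> B"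
  proof
    fix a assume a: "a \<in> A"
    have "x * a + 0 \<in> plus_set (lmul x A) Q" using a ri_0[OF rQ] by (intro plus_setI lmulI)
    then have "x * a + 0 \<in> plus_set (lmul x B) Q" using AB by blast
    then obtain u q where uq: "x * a + 0 = u + q" "u \<in> lmul x B" "q \<in> Q" by (rule plus_setE)
    then obtain b where b: "u = x * b" "b \<in> B" by (auto elim: lmulE)
    have "x * (a - b) = q" using uq b by (simp add: right_diff_distrib)
    then have "a - b \<in> A0" using pre uq(3) by auto
    then have "a - b \<in> B" using B(2) by blast
    then have "(a - b) + b \<in> B" using ri_add[OF B(1) _ b(2)] by blast
    then show "a \<in> B" by simp
  qed
qed

lemma kd_image:
  assumes rP: "right_ideal P" and rK: "right_ideal K" and kd: "kd_le j (K \<inter> {k. s * k \<in> P}) K"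
  shows "kd_le j P (plus_set (lmul s K) P)"
proof (rule kd_embed[OF kd])
  show "right_ideal P" by fact
  show "right_ideal (plus_set (lmul s K) P)" using ri_plus[OF ri_lmul[OF rK] rP] .
  show "P \<subseteq> plus_set (lmul s K) P" using plus_right[OF ri_lmul[OF rK]] .
  show "embeds (\<lambda>A. K \<inter> {k. s * k \<in> A}) P (plus_set (lmul s K) P) (K \<inter> {k. s * k \<in> P}) K"
  proof (rule embedsI)
    fix A assume A: "right_ideal A" "P \<subseteq> A" "A \<subseteq> plus_set (lmul s K) P"
    show "right_ideal (K \<inter> {k. s * k \<in> A}) \<and> K \<inter> {k. s * k \<in> P} \<subseteq> K \<inter> {k. s * k \<in> A} \<and> K \<inter> {k. s * k \<in> A} \<subseteq> K"
      using ri_Int[OF rK ri_pre[OF A(1)]] A(2) by blast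
  next
    fix A B :: "'a set" assume "A \<subseteq> B" then show "K \<inter> {k. s * k \<in> A} \<subseteq> K \<inter> {k. s * k \<in> B}" by blast
  next
    fix A B assume A: "right_ideal A" "P \<subseteq> A" "A \<subseteq> plus_set (lmul s K) P"
      and B: "right_ideal B" "P \<subseteq> B" "B \<subseteq> plus_set (lmul s K) P"
      and AB: "K \<inter> {k. s * k \<in> A} \<subseteq> K \<inter> {k. s * k \<in> B}"
    show "A \<subseteq> B"
    proof
      fix a assume a: "a \<in> A"
      then have "a \<in> plus_set (lmul s K) P" using A by blast
      then obtain u q where uq: "a = u + q" "u \<in> lmul s K" "q \<in> P" by (rule plus_setE)
      then obtain k where k: "u = s * k" "k \<in> K" by (auto elim: lmulE)
      have "a - q \<in> A" using ri_diff[OF A(1) a] uq(3) A(2) by blast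
      then have "s * k \<in> A" using uq k by simp
      then have "k \<in> K \<inter> {k. s * k \<in> B}" using AB k by blast
      then have "s * k \<in> B" by blast
      then show "a \<in> B" using uq k ri_add[OF B(1)] B(2) by blast
    qed
  qed
qed

lemma chain_lemma:
  assumes tP: "two_sided_ideal P" and reg: "\<forall>x. c * x \<in> P \<longrightarrow> x \<in> P"
    and kd: "kd_le (Suc j) P UNIV"
  shows "kd_le j (plus_set (lmul c UNIV) P) UNIV"
proof -
  have rP: "right_ideal P" using tP ts_ri by blast
  define C where "C i = plus_set (lmul (c ^ i) UNIV) P" for i
  have rC: "right_ideal (C i)" for i unfolding C_def using ri_plus[OF ri_lmul[OF ri_UNIV] rP] .
  have PC: "P \<subseteq> C i" for i unfolding C_def using plus_right[OF ri_lmul[OF ri_UNIV]] .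
  have dC: "C (Suc i) \<subseteq> C i" for i
  proof
    fix z assume "z \<in> C (Suc i)"
    then obtain u q where uq: "z = u + q" "u \<in> lmul (c ^ Suc i) UNIV" "q \<in> P" unfolding C_def by (rule plus_setE)
    then obtain r where r: "u = c ^ Suc i * r" by (auto elim: lmulE)
    have "u = c ^ i * (c * r)" using r by (simp only: power_Suc2 mult.assoc)
    then have "u \<in> lmul (c ^ i) UNIV" by (auto intro: lmulI)
    then show "z \<in> C i" unfolding C_def using uq by (auto intro: plus_setI)
  qed
  have hC: "\<forall>i. right_ideal (C i) \<and> P \<subseteq> C i \<and> C i \<subseteq> UNIV \<and> C (Suc i) \<subseteq> C i"
    using rC PC dC by blast
  obtain N where N: "\<forall>i\<ge>N. kd_le j (C (Suc i)) (C i)" using kd_SucD[OF kd hC] by blast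
  have kN: "kd_le j (C (Suc N)) (C N)" using N by blast
  have regn: "\<forall>x. c ^ n * x \<in> P \<longrightarrow> x \<in> P" for n
  proof (induction n)
    case 0 then show ?case by simp
  next
    case (Suc n)
    show ?case
    proof (intro allI impI)
      fix x assume "c ^ Suc n * x \<in> P"
      then have "c * (c ^ n * x) \<in> P" by (simp only: power_Suc mult.assoc)
      then have "c ^ n * x \<in> P" using reg by blast
      then show "x \<in> P" using Suc.IH by blast
    qed
  qed
  have C1: "C 1 = plus_set (lmul c UNIV) P" unfolding C_def by simp
  have emb: "embeds (\<lambda>A. plus_set (lmul (c ^ N) A) P) (C 1) UNIV (C (Suc N)) (C N)"
  proof (rule psi_embeds[OF rP rC])
    show "{a. c ^ N * a \<in> P} \<subseteq> C 1" using regn PC by blast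
    show "plus_set (lmul (c ^ N) UNIV) P \<subseteq> C N" unfolding C_def by simp
    show "C (Suc N) \<subseteq> plus_set (lmul (c ^ N) (C 1)) P"
    proof
      fix z assume "z \<in> C (Suc N)"
      then obtain u q where uq: "z = u + q" "u \<in> lmul (c ^ Suc N) UNIV" "q \<in> P" unfolding C_def by (rule plus_setE)
      then obtain r where r: "u = c ^ Suc N * r" by (auto elim: lmulE)
      have "c * r + 0 \<in> C 1" unfolding C1 using ri_0[OF rP] by (intro plus_setI lmulI) auto
      then have cr: "c * r \<in> C 1" by simp
      have "u = c ^ N * (c * r)" using r by (simp only: power_Suc2 mult.assoc)
      then have "u \<in> lmul (c ^ N) (C 1)" using cr by (auto intro: lmulI)
      then show "z \<in> plus_set (lmul (c ^ N) (C 1)) P" using uq by (auto intro: plus_setI)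
    qed
  qed
  have "kd_le j (C 1) UNIV" using kd_embed[OF kN emb rC ri_UNIV] by blast
  then show ?thesis using C1 by simp
qed

fun SKl :: "'a::ring_1 set \<Rightarrow> 'a set \<Rightarrow> 'a list \<Rightarrow> 'a set" where
  "SKl P K [] = P"
| "SKl P K (s # ss) = plus_set (plus_set (lmul s K) P) (SKl P K ss)"

lemma lemmaE:
  assumes N: "right_noetherian TYPE('a::ring_1)" and P: "prime_ideal (P :: 'a set)"
    and rK: "right_ideal K" and PK: "P \<subseteq> K" and nKP: "\<not> K \<subseteq> P" and kd: "kd_le j P K"
  shows "kd_le j P UNIV"
proof -
  have tP: "two_sided_ideal P" using P by (simp add: prime_ideal_def)
  have rP: "right_ideal P" using tP ts_ri by blast
  have rS: "right_ideal (plus_set (lmul s K) P)" for s using ri_plus[OF ri_lmul[OF rK] rP] .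
  have rSK: "right_ideal (SKl P K ss)" for ss
    by (induction ss) (simp_all add: rP ri_plus rS)
  have PSK: "P \<subseteq> SKl P K ss" for ss
  proof (induction ss)
    case Nil then show ?case by simp
  next
    case (Cons s ss) then show ?case using plus_right[OF rS[of s], of "SKl P K ss"] by simp
  qed
  have kds: "kd_le j P (plus_set (lmul s K) P)" for s
  proof (rule kd_image[OF rP rK])
    have "P \<subseteq> K \<inter> {k. s * k \<in> P}" using PK ts_left[OF tP] by blast
    then show "kd_le j (K \<inter> {k. s * k \<in> P}) K"
      using kd_sub[OF kd ri_Int[OF rK ri_pre[OF rP]] rK] by blast
  qed
  have kdSK: "kd_le j P (SKl P K ss)" for ss
  proof (induction ss)
    case Nil show ?case using kd_sub[OF kd rP rP order.refl order.refl PK] by simp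
  next
    case (Cons s ss)
    have "kd_le j P (plus_set (plus_set (lmul s K) P) (SKl P K ss))"
      using kd_plus[OF kds Cons rP rS rSK plus_right[OF ri_lmul[OF rK]] PSK] .
    then show ?case by simp
  qed
  define F where "F = {SKl P K ss | ss. True}"
  have "SKl P K [] \<in> F" unfolding F_def by blast
  then have Fne: "F \<noteq> {}" by blast
  have Fri: "\<forall>A\<in>F. right_ideal A" unfolding F_def using rSK by blast
  obtain M where M: "M \<in> F" "\<forall>A\<in>F. M \<subseteq> A \<longrightarrow> A = M" using noeth_max[OF N Fne Fri] by blast
  then obtain ss0 where ss0: "M = SKl P K ss0" unfolding F_def by blast
  have rM: "right_ideal M" using rSK ss0 by simp
  have PM: "P \<subseteq> M" using PSK ss0 by simp
  have sKM: "lmul s K \<subseteq> M" for s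
  proof -
    have "SKl P K (s # ss0) \<in> F" unfolding F_def by blast
    moreover have "M \<subseteq> SKl P K (s # ss0)" using ss0 plus_right[OF rS[of s]] by simp
    ultimately have eq: "SKl P K (s # ss0) = M" using M(2) by blast
    have "lmul s K \<subseteq> plus_set (lmul s K) P" using plus_left[OF rP] .
    also have "\<dots> \<subseteq> SKl P K (s # ss0)" using plus_left[OF rSK[of ss0]] by simp
    finally show ?thesis using eq by simp
  qed
  have leftM: "r * z \<in> M" if "z \<in> SKl P K ss" for r z ss
    using that
  proof (induction ss arbitrary: z)
    case Nil then show ?case using ts_left[OF tP] PM by auto
  next
    case (Cons s ss)
    from Cons.prems obtain u z' where uz: "z = u + z'" "u \<in> plus_set (lmul s K) P" "z' \<in> SKl P K ss"
      by (auto elim: plus_setE)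
    from uz(2) obtain v q where vq: "u = v + q" "v \<in> lmul s K" "q \<in> P" by (rule plus_setE)
    from vq(2) obtain k where k: "v = s * k" "k \<in> K" by (rule lmulE)
    have "r * s * k \<in> lmul (r * s) K" using k(2) by (rule lmulI)
    then have a1: "r * v \<in> M" using sKM k by (auto simp: mult.assoc)
    have a2: "r * q \<in> M" using ts_left[OF tP vq(3)] PM by blast
    have a3: "r * z' \<in> M" using Cons.IH[OF uz(3)] .
    have "r * z = r * v + r * q + r * z'" using uz vq by (simp add: distrib_left)
    then show ?case using ri_add[OF rM] a1 a2 a3 by simp
  qed
  have tM: "\<forall>z\<in>M. \<forall>r. r * z \<in> M" using leftM ss0 by blast
  have KM: "K \<subseteq> M"
  proof
    fix k assume "k \<in> K"
    then have "1 * k \<in> lmul 1 K" by (rule lmulI)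
    then show "k \<in> M" using sKM by auto
  qed
  have ess: "\<forall>K'. right_ideal K' \<longrightarrow> P \<subseteq> K' \<longrightarrow> K' \<inter> M \<subseteq> P \<longrightarrow> K' \<subseteq> P"
  proof (intro allI impI)
    fix K' assume rK': "right_ideal K'" and PK': "P \<subseteq> K'" and KM': "K' \<inter> M \<subseteq> P"
    show "K' \<subseteq> P"
    proof (rule ccontr)
      assume "\<not> K' \<subseteq> P"
      then obtain y where y: "y \<in> K'" "y \<notin> P" by blast
      obtain f where f: "f \<in> K" "f \<notin> P" using nKP by blast
      have "\<not> (\<forall>r. y * r * f \<in> P)" using prime_elem[OF P] y f by blast
      then obtain r where r: "y * r * f \<notin> P" by blast
      have "y * (r * f) \<in> K'" using ri_mult[OF rK' y(1)] .
      then have "y * r * f \<in> K'" by (simp add: mult.assoc)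
      moreover have "y * r * f \<in> M" using tM f(1) KM by blast
      ultimately show False using KM' r by blast
    qed
  qed
  obtain c where c: "c \<in> M" "\<forall>x. c * x \<in> P \<longrightarrow> x \<in> P" using goldie[OF N P rM PM ess] by blast
  have kdM: "kd_le j P M" using kdSK ss0 by simp
  have emb: "embeds (\<lambda>A. plus_set (lmul c A) P) P UNIV P M"
  proof (rule psi_embeds[OF rP rP])
    show "{a. c * a \<in> P} \<subseteq> P" using c(2) by blast
    show "P \<subseteq> plus_set (lmul c P) P" using plus_right[OF ri_lmul[OF rP]] .
    show "plus_set (lmul c UNIV) P \<subseteq> M"
    proof (rule plus_sub[OF rM _ PM])
      show "lmul c UNIV \<subseteq> M" using ri_mult[OF rM c(1)] by (auto elim: lmulE)
    qed
  qed
  show ?thesis using kd_embed[OF kdM emb rP ri_UNIV] by blast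
qed



lemma kdim_ge: "krull_dim I J \<ge> -1" unfolding krull_dim_def by simp

lemma kdim_lt:
  assumes h: "has_krull_dim I J" and m: "m \<ge> 0"
  shows "krull_dim I J < m \<longleftrightarrow> kd_le (nat m) I J"
proof -
  define L where "L = (LEAST j. kd_le j I J)"
  have kL: "kd_le L I J" unfolding L_def using h unfolding has_krull_dim_def by (rule LeastI_ex)
  have kd: "krull_dim I J = int L - 1" unfolding krull_dim_def L_def by simp
  show ?thesis
  proof
    assume "krull_dim I J < m"
    then have "L \<le> nat m" using kd m by linarith
    then show "kd_le (nat m) I J" using kd_mono[OF kL] by blast
  next
    assume "kd_le (nat m) I J"
    then have "L \<le> nat m" unfolding L_def by (rule Least_le)
    then show "krull_dim I J < m" using kd m by linarith
  qed
qed

lemma kdim_eq: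
  assumes h: "has_krull_dim I J" and m: "m \<ge> 0" and e: "krull_dim I J = m"
  shows "kd_le (Suc (nat m)) I J" "\<not> kd_le (nat m) I J"
proof -
  define L where "L = (LEAST j. kd_le j I J)"
  have kL: "kd_le L I J" unfolding L_def using h unfolding has_krull_dim_def by (rule LeastI_ex)
  have kd: "krull_dim I J = int L - 1" unfolding krull_dim_def L_def by simp
  have L: "L = Suc (nat m)" using kd e m by linarith
  show "kd_le (Suc (nat m)) I J" using kL L by simp
  show "\<not> kd_le (nat m) I J"
  proof
    assume "kd_le (nat m) I J"
    then have "L \<le> nat m" unfolding L_def by (rule Least_le)
    then show False using L by simp
  qed
qed

lemma reg_mult:
  assumes c: "c \<in> regular_mod A" and d: "d \<in> regular_mod A" shows "c * d \<in> regular_mod A"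
proof -
  have c1: "\<forall>x. x * c \<in> A \<longrightarrow> x \<in> A" "\<forall>x. c * x \<in> A \<longrightarrow> x \<in> A" using c unfolding regular_mod_def by blast+
  have d1: "\<forall>x. x * d \<in> A \<longrightarrow> x \<in> A" "\<forall>x. d * x \<in> A \<longrightarrow> x \<in> A" using d unfolding regular_mod_def by blast+
  have "x \<in> A" if "x * (c * d) \<in> A" for x
  proof -
    have "x * c * d \<in> A" using that by (simp add: mult.assoc)
    then have "x * c \<in> A" using d1 by blast
    then show ?thesis using c1 by blast
  qed
  moreover have "x \<in> A" if "c * d * x \<in> A" for x
  proof -
    have "c * (d * x) \<in> A" using that by (simp add: mult.assoc)
    then have "d * x \<in> A" using c1 by blast
    then show ?thesis using d1 by blast
  qed
  ultimately show ?thesis unfolding regular_mod_def by blast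
qed

theorem mainTheorem6:
  fixes n m :: int and X :: "'a::ring_1 set set" and V :: "'a set"
    and k w g :: "'a set set"
  assumes "prime_ring TYPE('a)"
    and "right_noetherian TYPE('a)"
    and "has_krull_dim ({0} :: 'a set) UNIV"
    and "krull_dim ({0} :: 'a set) UNIV = n"
    and "m \<le> n"
    and X_def: "X = {p \<in> Spec. krull_dim p UNIV = m}"
    and V_def: "V = (\<Inter>p\<in>X. regular_mod p)"
    and k_def: "k = {I. right_ideal I \<and> I \<inter> V \<noteq> {}}"
    and w_def: "w = {I. right_ideal I \<and> V_torsion_quot V I}"
    and g_def: "g = {I. right_ideal I \<and> krull_dim I UNIV < m}"
  shows "gabriel_filter w \<and> gabriel_filter g
         \<and> (right_intersection_condition X V \<longrightarrow> g \<subseteq> k)"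
proof -
  note N = assms(2)
  obtain j0 where j0: "kd_le j0 ({0} :: 'a set) UNIV" using assms(3) unfolding has_krull_dim_def by blast
  have hkd: "has_krull_dim I UNIV" if rI: "right_ideal (I :: 'a set)" for I
  proof -
    have "{0} \<subseteq> I" using ri_0[OF rI] by blast
    then have "kd_le j0 I UNIV" using kd_sub[OF j0 rI ri_UNIV] by blast
    then show ?thesis unfolding has_krull_dim_def by blast
  qed
  have Vmult: "c * d \<in> V" if "c \<in> V" "d \<in> V" for c d
    using that reg_mult unfolding V_def by blast
  have gw: "gabriel_filter w"
    unfolding gabriel_filter_def
  proof (intro conjI allI impI ballI)
    fix I assume "I \<in> w" then show "right_ideal I" unfolding w_def by blast
  next
    fix I J assume I: "I \<in> w" and rJ: "right_ideal J" and IJ: "I \<subseteq> J"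
    have "V_torsion_quot V J" using I IJ unfolding w_def V_torsion_quot_def by blast
    then show "J \<in> w" using rJ unfolding w_def by blast
  next
    fix I J assume I: "I \<in> w" and J: "J \<in> w"
    have rI: "right_ideal I" and rJ: "right_ideal J" using I J unfolding w_def by auto
    have "V_torsion_quot V (I \<inter> J)" unfolding V_torsion_quot_def
    proof
      fix x
      obtain t1 where t1: "t1 \<in> V" "x * t1 \<in> I" using I unfolding w_def V_torsion_quot_def by blast
      obtain t2 where t2: "t2 \<in> V" "x * t1 * t2 \<in> J" using J unfolding w_def V_torsion_quot_def by blast
      have "x * t1 * t2 \<in> I" using ri_mult[OF rI t1(2)] .
      then have "x * (t1 * t2) \<in> I \<inter> J" using t2 by (simp add: mult.assoc)
      then show "\<exists>t\<in>V. x * t \<in> I \<inter> J" using Vmult[OF t1(1) t2(1)] by blast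
    qed
    then show "I \<inter> J \<in> w" using ri_Int[OF rI rJ] unfolding w_def by blast
  next
    fix I x assume I: "I \<in> w"
    have rI: "right_ideal I" using I unfolding w_def by auto
    have "V_torsion_quot V {a. x * a \<in> I}" unfolding V_torsion_quot_def
    proof
      fix y
      obtain t where t: "t \<in> V" "x * y * t \<in> I" using I unfolding w_def V_torsion_quot_def by blast
      then show "\<exists>t\<in>V. y * t \<in> {a. x * a \<in> I}" by (auto simp: mult.assoc)
    qed
    then show "{a. x * a \<in> I} \<in> w" using ri_pre[OF rI] unfolding w_def by blast
  qed
  have gg: "gabriel_filter g"
  proof (cases "m \<ge> 0")
    case False
    have nlt: "\<not> krull_dim I UNIV < m" for I :: "'a set" using kdim_ge[of I UNIV] False by linarith
    have "g = {}" unfolding g_def using nlt by blast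
    then show ?thesis unfolding gabriel_filter_def by blast
  next
    case True
    define mn where "mn = nat m"
    have g2: "g = {I. right_ideal I \<and> kd_le mn I UNIV}"
      unfolding g_def mn_def using kdim_lt[OF hkd True] by blast
    show ?thesis
      unfolding gabriel_filter_def g2
    proof (intro conjI allI impI ballI)
      fix I assume "I \<in> {I. right_ideal I \<and> kd_le mn I UNIV}" then show "right_ideal I" by blast
    next
      fix I J assume I: "I \<in> {I. right_ideal I \<and> kd_le mn I UNIV}" and rJ: "right_ideal J" and IJ: "I \<subseteq> J"
      have "kd_le mn J UNIV" using kd_sub[of mn I UNIV J UNIV] I rJ IJ ri_UNIV by blast
      then show "J \<in> {I. right_ideal I \<and> kd_le mn I UNIV}" using rJ by blast
    next
      fix I J :: "'a set" assume I: "I \<in> {I. right_ideal I \<and> kd_le mn I UNIV}" and J: "J \<in> {I. right_ideal I \<and> kd_le mn I UNIV}"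
      then show "I \<inter> J \<in> {I. right_ideal I \<and> kd_le mn I UNIV}" using kd_Int[of mn I J] ri_Int[of I J] by blast
    next
      fix I x assume I: "I \<in> {I. right_ideal I \<and> kd_le mn I UNIV}"
      have rI: "right_ideal I" and kI: "kd_le mn I UNIV" using I by auto
      have rpre: "right_ideal {a. x * a \<in> I}" using ri_pre[OF rI] .
      have emb: "embeds (\<lambda>A. plus_set (lmul x A) I) {a. x * a \<in> I} UNIV I UNIV"
        using psi_embeds[OF rI rpre order.refl plus_right[OF ri_lmul[OF rpre]] subset_UNIV] .
      have "kd_le mn {a. x * a \<in> I} UNIV" using kd_embed[OF kI emb rpre ri_UNIV subset_UNIV] .
      then show "{a. x * a \<in> I} \<in> {I. right_ideal I \<and> kd_le mn I UNIV}" using rpre by blast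
    qed
  qed
  have gk: "g \<subseteq> k" if ric: "right_intersection_condition X V"
  proof
    fix I assume Ig: "I \<in> g"
    have rI: "right_ideal I" using Ig unfolding g_def by blast
    have lt: "krull_dim I UNIV < m" using Ig unfolding g_def by blast
    have m0: "m \<ge> 0" using lt kdim_ge[of I UNIV] by linarith
    define mn where "mn = nat m"
    have kI: "kd_le mn I UNIV" using lt kdim_lt[OF hkd[OF rI] m0] unfolding mn_def by blast
    have "I \<inter> regular_mod p \<noteq> {}" if pX: "p \<in> X" for p
    proof -
      have P: "prime_ideal p" using pX unfolding X_def Spec_def by blast
      have tP: "two_sided_ideal p" using P by (simp add: prime_ideal_def)
      have rP: "right_ideal p" using tP ts_ri by blast
      have ep: "krull_dim p UNIV = m" using pX unfolding X_def by blast
      have kp: "kd_le (Suc mn) p UNIV" and nkp: "\<not> kd_le mn p UNIV"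
        using kdim_eq[OF hkd[OF rP] m0 ep] unfolding mn_def by blast+
      define J where "J = plus_set I p"
      have rJ: "right_ideal J" unfolding J_def using ri_plus[OF rI rP] .
      have IJ: "I \<subseteq> J" unfolding J_def using plus_left[OF rP] .
      have PJ: "p \<subseteq> J" unfolding J_def using plus_right[OF rI] .
      have kJ: "kd_le mn J UNIV" using kd_sub[OF kI rJ ri_UNIV IJ] by blast
      have ess: "\<forall>K. right_ideal K \<longrightarrow> p \<subseteq> K \<longrightarrow> K \<inter> J \<subseteq> p \<longrightarrow> K \<subseteq> p"
      proof (intro allI impI)
        fix K assume rK: "right_ideal K" and pK: "p \<subseteq> K" and KJ: "K \<inter> J \<subseteq> p"
        show "K \<subseteq> p"
        proof (rule ccontr)
          assume nKp: "\<not> K \<subseteq> p"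
          have emb: "embeds (\<lambda>A. plus_set A J) p K J UNIV"
          proof (rule embedsI)
            fix A assume A: "right_ideal A" "p \<subseteq> A" "A \<subseteq> K"
            show "right_ideal (plus_set A J) \<and> J \<subseteq> plus_set A J \<and> plus_set A J \<subseteq> UNIV"
              using ri_plus[OF A(1) rJ] plus_right[OF A(1)] by blast
          next
            fix A B :: "'a set" assume "A \<subseteq> B" then show "plus_set A J \<subseteq> plus_set B J"
              by (rule plus_mono) auto
          next
            fix A B assume A: "right_ideal A" "p \<subseteq> A" "A \<subseteq> K" and B: "right_ideal B" "p \<subseteq> B" "B \<subseteq> K"
              and AB: "plus_set A J \<subseteq> plus_set B J"
            show "A \<subseteq> B"
            proof
              fix a assume a: "a \<in> A"
              then have "a \<in> plus_set B J" using AB plus_left[OF rJ] by blast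
              then obtain b j where bj: "a = b + j" "b \<in> B" "j \<in> J" by (rule plus_setE)
              have "a \<in> K" "b \<in> K" using a bj A B by blast+
              then have "a - b \<in> K" using ri_diff[OF rK] by blast
              moreover have "a - b = j" using bj(1) by simp
              ultimately have "j \<in> K" by simp
              then have "j \<in> K \<inter> J" using bj(3) by blast
              then have "j \<in> B" using KJ B(2) by blast
              then show "a \<in> B" using bj ri_add[OF B(1)] by blast
            qed
          qed
          have "kd_le mn p K" using kd_embed[OF kJ emb rP rK pK] .
          then have "kd_le mn p UNIV" using lemmaE[OF N P rK pK nKp] by blast
          then show False using nkp by blast
        qed
      qed
      obtain c' where c'J: "c' \<in> J" and c'p: "\<forall>x. c' * x \<in> p \<longrightarrow> x \<in> p"
        using goldie[OF N P rJ PJ ess] by blast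
      obtain i q where iq: "c' = i + q" "i \<in> I" "q \<in> p" using c'J unfolding J_def by (rule plus_setE)
      have ireg: "\<forall>x. i * x \<in> p \<longrightarrow> x \<in> p"
      proof (intro allI impI)
        fix x assume "i * x \<in> p"
        moreover have "q * x \<in> p" using ri_mult[OF rP iq(3)] .
        ultimately have "i * x + q * x \<in> p" using ri_add[OF rP] by blast
        then have "c' * x \<in> p" using iq by (simp add: distrib_right)
        then show "x \<in> p" using c'p by blast
      qed
      have ileft: "\<forall>x. x * i \<in> p \<longrightarrow> x \<in> p"
      proof (intro allI impI)
        fix x assume xi: "x * i \<in> p"
        show "x \<in> p"
        proof (rule ccontr)
          assume xp: "x \<notin> p"
          have kc: "kd_le mn (plus_set (lmul i UNIV) p) UNIV" using chain_lemma[OF tP ireg kp] .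
          have sub: "plus_set (lmul i UNIV) p \<subseteq> UNIV \<inter> {y. x * y \<in> p}"
          proof
            fix z assume "z \<in> plus_set (lmul i UNIV) p"
            then obtain u q' where uq: "z = u + q'" "u \<in> lmul i UNIV" "q' \<in> p" by (rule plus_setE)
            then obtain r where r: "u = i * r" by (auto elim: lmulE)
            have "x * i * r \<in> p" using ri_mult[OF rP xi] .
            moreover have "x * q' \<in> p" using ts_left[OF tP uq(3)] .
            ultimately have "x * i * r + x * q' \<in> p" using ri_add[OF rP] by blast
            then have "x * z \<in> p" using uq r by (simp add: distrib_left mult.assoc)
            then show "z \<in> UNIV \<inter> {y. x * y \<in> p}" by blast
          qed
          have rpre: "right_ideal (UNIV \<inter> {y. x * y \<in> p})" using ri_Int[OF ri_UNIV ri_pre[OF rP]] .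
          have "kd_le mn (UNIV \<inter> {y. x * y \<in> p}) UNIV"
            using kd_sub[OF kc rpre ri_UNIV sub] by blast
          then have kx: "kd_le mn p (plus_set (lmul x UNIV) p)" using kd_image[OF rP ri_UNIV] by blast
          have rX: "right_ideal (plus_set (lmul x UNIV) p)" using ri_plus[OF ri_lmul[OF ri_UNIV] rP] .
          have pX': "p \<subseteq> plus_set (lmul x UNIV) p" using plus_right[OF ri_lmul[OF ri_UNIV]] .
          have "x * 1 + 0 \<in> plus_set (lmul x UNIV) p" using ri_0[OF rP] by (intro plus_setI lmulI) auto
          then have "x \<in> plus_set (lmul x UNIV) p" by simp
          then have nX: "\<not> plus_set (lmul x UNIV) p \<subseteq> p" using xp by blast
          have "kd_le mn p UNIV" using lemmaE[OF N P rX pX' nX kx] .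
          then show False using nkp by blast
        qed
      qed
      have "i \<in> regular_mod p" unfolding regular_mod_def using ireg ileft by blast
      then show ?thesis using iq(2) by blast
    qed
    then have "I \<inter> V \<noteq> {}" using ric rI unfolding right_intersection_condition_def by blast
    then show "I \<in> k" using rI unfolding k_def by blast
  qed
  show ?thesis using gw gg gk by blast
qed


end
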